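(* Let $\mathbf A \in \mathbb{H}^{M\times K}$, $\mathbf C \in \mathbb{H}^{K\times N}$, let $\mathbf b \in \mathbb{H}^{K\times 1}$ and let $\mathbf B = \operatorname{diag}(\mathbf b)\in\mathbb{H}^{K\times K}$. Then $$\begin{aligned} \operatorname{vec}\big(\mathbf A \cdot_{\mathrm L} [\mathbf B \cdot_{\mathrm R} \mathbf C]\big) &= (\mathbf C^{\mathrm T} \diamond_{\mathrm R} \mathbf A)\cdot_{\mathrm L} \mathbf b,\\ \operatorname{vec}\big(\mathbf A \cdot_{\mathrm R} [\mathbf B \cdot_{\mathrm L} \mathbf C]\big) &= (\mathbf C^{\mathrm T} \diamond_{\mathrm L} \mathbf A)\cdot_{\mathrm R} \mathbf b,\\ \operatorname{vec}\big([\mathbf A \cdot_{\mathrm L} \mathbf B] \cdot_{\mathrm R} \mathbf C\big) &= (\mathbf C^{\mathrm T} \diamond_{\mathrm L} \mathbf A)\cdot_{\mathrm L} \mathbf b,\\ \operatorname{vec}\big([\mathbf A \cdot_{\mathrm R} \mathbf B] \cdot_{\mathrm L} \mathbf C\big) &= (\mathbf C^{\mathrm T} \diamond_{\mathrm R} \mathbf A)\cdot_{\mathrm R} \mathbf b. \end{aligned}$$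
   Context: $\mathbb{H}$ denotes the skew field of real quaternions and $^{\mathrm T}$ the (non-conjugating) transpose. $\operatorname{diag}(\mathbf b)$ is the square matrix with the entries of $\mathbf b$ on its main diagonal and zeros elsewhere. For quaternion matrices, the left matrix product is $[\mathbf X \cdot_{\mathrm L} \mathbf Y]_{m,n} = \sum_{k} [\mathbf X]_{m,k}[\mathbf Y]_{k,n}$ and the right matrix product is $[\mathbf X \cdot_{\mathrm R} \mathbf Y]_{m,n} = \sum_{k} [\mathbf Y]_{k,n}[\mathbf X]_{m,k}$ (vectors are one-column matrices). For $\mathbf X\in\mathbb{H}^{P\times Q}$, $\operatorname{vec}(\mathbf X)\in\mathbb{H}^{PQ\times 1}$ is the column-stacking vectorization, $[\operatorname{vec}(\mathbf X)]_{p+(q-1)P} = [\mathbf X]_{p,q}$. The left Kronecker product $\mathbf X \otimes_{\mathrm L} \mathbf Y$ is the block matrix whose $(i,j)$ block is $[\mathbf X]_{i,j}\,\mathbf Y$; the right Kronecker product $\mathbf X \otimes_{\mathrm R} \mathbf Y$ is the block matrix whose $(i,j)$ block is $\mathbf Y\,[\mathbf X]_{i,j}$. For matrices $\mathbf X = [\mathbf x_1,\dots,\mathbf x_K]$ and $\mathbf Y = [\mathbf y_1,\dots,\mathbf y_K]$ with the same number $K$ of columns, the left Khatri–Rao product is $\mathbf X \diamond_{\mathrm L} \mathbf Y = [\mathbf x_1 \otimes_{\mathrm L} \mathbf y_1,\dots,\mathbf x_K \otimes_{\mathrm L} \mathbf y_K]$ and the right Khatri–Rao product is $\mathbf X \diamond_{\mathrm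 R} \mathbf Y = [\mathbf x_1 \otimes_{\mathrm R} \mathbf y_1,\dots,\mathbf x_K \otimes_{\mathrm R} \mathbf y_K]$. *)

theory Defs
  imports Complex_Main "Jordan_Normal_Form.Matrix"
begin

datatype quat = Quat (Re: real) (Im1: real) (Im2: real) (Im3: real)

lemma quat_eq_iff: "x = y \<longleftrightarrow> Re x = Re y \<and> Im1 x = Im1 y \<and> Im2 x = Im2 y \<and> Im3 x = Im3 y"
  by (cases x; cases y) auto

instantiation quat :: ring_1
begin
definition "0 = Quat 0 0 0 0"
definition "1 = Quat 1 0 0 0"
definition "x + y = Quat (Re x + Re y) (Im1 x + Im1 y) (Im2 x + Im2 y) (Im3 x + Im3 y)"
definition "x - y = Quat (Re x - Re y) (Im1 x - Im1 y) (Im2 x - Im2 y) (Im3 x - Im3 y)"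
definition "- x = Quat (- Re x) (- Im1 x) (- Im2 x) (- Im3 x)"
definition "x * y = Quat
   (Re x * Re y - Im1 x * Im1 y - Im2 x * Im2 y - Im3 x * Im3 y)
   (Re x * Im1 y + Im1 x * Re y + Im2 x * Im3 y - Im3 x * Im2 y)
   (Re x * Im2 y - Im1 x * Im3 y + Im2 x * Re y + Im3 x * Im1 y)
   (Re x * Im3 y + Im1 x * Im2 y - Im2 x * Im1 y + Im3 x * Re y)"
instance
  by standard (simp_all add: quat_eq_iff zero_quat_def one_quat_def plus_quat_def
      minus_quat_def uminus_quat_def times_quat_def algebra_simps)
end

definition lprod :: "quat mat \<Rightarrow> quat mat \<Rightarrow> quat mat" where
  "lprod X Y = mat (dim_row X) (dim_col Y) (\<lambda>(m, n). \<Sum>k<dim_col X. X $$ (m, k) * Y $$ (k, n))"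

definition rprod :: "quat mat \<Rightarrow> quat mat \<Rightarrow> quat mat" where
  "rprod X Y = mat (dim_row X) (dim_col Y) (\<lambda>(m, n). \<Sum>k<dim_col X. Y $$ (k, n) * X $$ (m, k))"

definition diagm :: "quat mat \<Rightarrow> quat mat" where
  "diagm b = mat (dim_row b) (dim_row b) (\<lambda>(i, j). if i = j then b $$ (i, 0) else 0)"

definition vecm :: "quat mat \<Rightarrow> quat mat" where
  "vecm X = mat (dim_row X * dim_col X) 1
     (\<lambda>(i, _). X $$ (i mod dim_row X, i div dim_row X))"

text \<open>Kronecker products: block (i,j) is X(i,j) Y (left) resp. Y X(i,j) (right)\<close>
definition kronL :: "quat mat \<Rightarrow> quat mat \<Rightarrow> quat mat" where
  "kronL X Y = mat (dim_row X * dim_row Y) (dim_col X * dim_col Y)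
     (\<lambda>(a, c). X $$ (a div dim_row Y, c div dim_col Y) * Y $$ (a mod dim_row Y, c mod dim_col Y))"

definition kronR :: "quat mat \<Rightarrow> quat mat \<Rightarrow> quat mat" where
  "kronR X Y = mat (dim_row X * dim_row Y) (dim_col X * dim_col Y)
     (\<lambda>(a, c). Y $$ (a mod dim_row Y, c mod dim_col Y) * X $$ (a div dim_row Y, c div dim_col Y))"

definition colm :: "quat mat \<Rightarrow> nat \<Rightarrow> quat mat" where
  "colm X k = mat (dim_row X) 1 (\<lambda>(i, _). X $$ (i, k))"

definition khatriL :: "quat mat \<Rightarrow> quat mat \<Rightarrow> quat mat" where
  "khatriL X Y = mat (dim_row X * dim_row Y) (dim_col X)
     (\<lambda>(a, k). kronL (colm X k) (colm Y k) $$ (a, 0))"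

definition khatriR :: "quat mat \<Rightarrow> quat mat \<Rightarrow> quat mat" where
  "khatriR X Y = mat (dim_row X * dim_row Y) (dim_col X)
     (\<lambda>(a, k). kronR (colm X k) (colm Y k) $$ (a, 0))"

end

theory Submission
  imports Defs
begin

lemma diag_r: "b \<in> carrier_mat K 1 \<Longrightarrow> C \<in> carrier_mat K N \<Longrightarrow> k < K \<Longrightarrow> q < N \<Longrightarrow>
  rprod (diagm b) C $$ (k,q) = C $$ (k,q) * b $$ (k,0)"
  by (simp add: rprod_def diagm_def if_distrib[of "\<lambda>x. _ * x"] cong: if_cong)

lemma diag_l: "b \<in> carrier_mat K 1 \<Longrightarrow> C \<in> carrier_mat K N \<Longrightarrow> k < K \<Longrightarrow> q < N \<Longrightarrow>
  lprod (diagm b) C $$ (k,q) = b $$ (k,0) * C $$ (k,q)"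
  by (simp add: lprod_def diagm_def if_distrib[of "\<lambda>x. x * _"] cong: if_cong)

lemma diag_r2: "b \<in> carrier_mat K 1 \<Longrightarrow> A \<in> carrier_mat M K \<Longrightarrow> k < K \<Longrightarrow> p < M \<Longrightarrow>
  rprod A (diagm b) $$ (p,k) = b $$ (k,0) * A $$ (p,k)"
  by (simp add: rprod_def diagm_def if_distrib[of "\<lambda>x. x * _"] cong: if_cong)

lemma diag_l2: "b \<in> carrier_mat K 1 \<Longrightarrow> A \<in> carrier_mat M K \<Longrightarrow> k < K \<Longrightarrow> p < M \<Longrightarrow>
  lprod A (diagm b) $$ (p,k) = A $$ (p,k) * b $$ (k,0)"
  by (simp add: lprod_def diagm_def if_distrib[of "\<lambda>x. _ * x"] cong: if_cong)

lemma kR: "A \<in> carrier_mat M K \<Longrightarrow> C \<in> carrier_mat K N \<Longrightarrow> a < N * M \<Longrightarrow> k < K \<Longrightarrow>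
  khatriR (transpose_mat C) A $$ (a,k) = A $$ (a mod M, k) * C $$ (k, a div M)"
proof -
  assume h: "A \<in> carrier_mat M K" "C \<in> carrier_mat K N" "a < N * M" "k < K"
  then have "M > 0" by (cases M) auto
  then have "a mod M < M" "a div M < N" using h by (auto simp: less_mult_imp_div_less)
  then show ?thesis using h by (simp add: khatriR_def kronR_def colm_def)
qed

lemma kL: "A \<in> carrier_mat M K \<Longrightarrow> C \<in> carrier_mat K N \<Longrightarrow> a < N * M \<Longrightarrow> k < K \<Longrightarrow>
  khatriL (transpose_mat C) A $$ (a,k) = C $$ (k, a div M) * A $$ (a mod M, k)"
proof -
  assume h: "A \<in> carrier_mat M K" "C \<in> carrier_mat K N" "a < N * M" "k < K"
  then have "M > 0" by (cases M) auto
  then have "a mod M < M" "a div M < N" using h by (auto simp: less_mult_imp_div_less)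
  then show ?thesis using h by (simp add: khatriL_def kronL_def colm_def)
qed

theorem mainTheorem7:
  fixes A C b :: "quat mat" and M K N :: nat
  assumes "A \<in> carrier_mat M K" and "C \<in> carrier_mat K N" and "b \<in> carrier_mat K 1"
  defines "B \<equiv> diagm b"
  shows "vecm (lprod A (rprod B C)) = lprod (khatriR (transpose_mat C) A) b \<and>
         vecm (rprod A (lprod B C)) = rprod (khatriL (transpose_mat C) A) b \<and>
         vecm (rprod (lprod A B) C) = lprod (khatriL (transpose_mat C) A) b \<and>
         vecm (lprod (rprod A B) C) = rprod (khatriR (transpose_mat C) A) b"
proof -
  note a = assms(1-3)
  have dims: "dim_row B = K" "dim_col B = K" using a by (auto simp: B_def diagm_def)
  have aux: "i mod M < M \<and> i div M < N" if "i < M * N" for i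
  proof -
    have "M > 0" using that by (cases M) auto
    then show ?thesis using that by (auto simp: less_mult_imp_div_less mult.commute)
  qed
  show ?thesis
  proof (intro conjI)
    show "vecm (lprod A (rprod B C)) = lprod (khatriR (transpose_mat C) A) b"
    proof (rule eq_matI)
      fix i j assume ij: "i < dim_row (lprod (khatriR (transpose_mat C) A) b)"
        "j < dim_col (lprod (khatriR (transpose_mat C) A) b)"
      then have i: "i < M * N" and j: "j = 0" using a by (auto simp: lprod_def khatriR_def mult.commute)
      show "vecm (lprod A (rprod B C)) $$ (i, j) = lprod (khatriR (transpose_mat C) A) b $$ (i, j)"
      proof -
        have d: "dim_col (rprod B C) = N" using a by (simp add: rprod_def)
        have "vecm (lprod A (rprod B C)) $$ (i, j) = (\<Sum>k<K. A $$ (i mod M, k) * rprod B C $$ (k, i div M))"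
          using a aux[OF i] i j d by (simp add: vecm_def lprod_def)
        also have "\<dots> = (\<Sum>k<K. khatriR (transpose_mat C) A $$ (i,k) * b $$ (k,0))"
          using a aux[OF i] i by (intro sum.cong) (auto simp: B_def diag_r kR mult.commute[of N M] mult.assoc)
        also have "\<dots> = lprod (khatriR (transpose_mat C) A) b $$ (i, j)"
          using a i j by (simp add: lprod_def khatriR_def mult.commute[of N M])
        finally show ?thesis .
      qed
    qed (use a dims in \<open>auto simp: vecm_def lprod_def rprod_def khatriR_def mult.commute\<close>)
    show "vecm (rprod A (lprod B C)) = rprod (khatriL (transpose_mat C) A) b"
    proof (rule eq_matI)
      fix i j assume ij: "i < dim_row (rprod (khatriL (transpose_mat C) A) b)"
        "j < dim_col (rprod (khatriL (transpose_mat C) A) b)"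
      then have i: "i < M * N" and j: "j = 0" using a by (auto simp: rprod_def khatriL_def mult.commute)
      show "vecm (rprod A (lprod B C)) $$ (i, j) = rprod (khatriL (transpose_mat C) A) b $$ (i, j)"
      proof -
        have d: "dim_col (lprod B C) = N" using a by (simp add: lprod_def)
        have "vecm (rprod A (lprod B C)) $$ (i, j) = (\<Sum>k<K. lprod B C $$ (k, i div M) * A $$ (i mod M, k))"
          using a aux[OF i] i j d by (simp add: vecm_def rprod_def)
        also have "\<dots> = (\<Sum>k<K. b $$ (k,0) * khatriL (transpose_mat C) A $$ (i,k))"
          using a aux[OF i] i by (intro sum.cong) (auto simp: B_def diag_l kL mult.commute[of N M] mult.assoc)
        also have "\<dots> = rprod (khatriL (transpose_mat C) A) b $$ (i, j)"
          using a i j by (simp add: rprod_def khatriL_def mult.commute[of N M])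
        finally show ?thesis .
      qed
    qed (use a dims in \<open>auto simp: vecm_def lprod_def rprod_def khatriL_def mult.commute\<close>)
    show "vecm (rprod (lprod A B) C) = lprod (khatriL (transpose_mat C) A) b"
    proof (rule eq_matI)
      fix i j assume ij: "i < dim_row (lprod (khatriL (transpose_mat C) A) b)"
        "j < dim_col (lprod (khatriL (transpose_mat C) A) b)"
      then have i: "i < M * N" and j: "j = 0" using a by (auto simp: lprod_def khatriL_def mult.commute)
      show "vecm (rprod (lprod A B) C) $$ (i, j) = lprod (khatriL (transpose_mat C) A) b $$ (i, j)"
      proof -
        have d: "dim_row (lprod A B) = M" "dim_col (lprod A B) = K" using a dims by (auto simp: lprod_def)
        have "vecm (rprod (lprod A B) C) $$ (i, j) = (\<Sum>k<K. C $$ (k, i div M) * lprod A B $$ (i mod M, k))"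
          using a aux[OF i] i j d by (simp add: vecm_def rprod_def)
        also have "\<dots> = (\<Sum>k<K. khatriL (transpose_mat C) A $$ (i,k) * b $$ (k,0))"
          using a aux[OF i] i by (intro sum.cong) (auto simp: B_def diag_l2 kL mult.commute[of N M] mult.assoc)
        also have "\<dots> = lprod (khatriL (transpose_mat C) A) b $$ (i, j)"
          using a i j by (simp add: lprod_def khatriL_def mult.commute[of N M])
        finally show ?thesis .
      qed
    qed (use a dims in \<open>auto simp: vecm_def lprod_def rprod_def khatriL_def mult.commute\<close>)
    show "vecm (lprod (rprod A B) C) = rprod (khatriR (transpose_mat C) A) b"
    proof (rule eq_matI)
      fix i j assume ij: "i < dim_row (rprod (khatriR (transpose_mat C) A) b)"
        "j < dim_col (rprod (khatriR (transpose_mat C) A) b)"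
      then have i: "i < M * N" and j: "j = 0" using a by (auto simp: rprod_def khatriR_def mult.commute)
      show "vecm (lprod (rprod A B) C) $$ (i, j) = rprod (khatriR (transpose_mat C) A) b $$ (i, j)"
      proof -
        have d: "dim_row (rprod A B) = M" "dim_col (rprod A B) = K" using a dims by (auto simp: rprod_def)
        have "vecm (lprod (rprod A B) C) $$ (i, j) = (\<Sum>k<K. rprod A B $$ (i mod M, k) * C $$ (k, i div M))"
          using a aux[OF i] i j d by (simp add: vecm_def lprod_def)
        also have "\<dots> = (\<Sum>k<K. b $$ (k,0) * khatriR (transpose_mat C) A $$ (i,k))"
          using a aux[OF i] i by (intro sum.cong) (auto simp: B_def diag_r2 kR mult.commute[of N M] mult.assoc)
        also have "\<dots> = rprod (khatriR (transpose_mat C) A) b $$ (i, j)"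
          using a i j by (simp add: rprod_def khatriR_def mult.commute[of N M])
        finally show ?thesis .
      qed
    qed (use a dims in \<open>auto simp: vecm_def lprod_def rprod_def khatriR_def mult.commute\<close>)
  qed
qed

end
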